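(* Let $P$ be a special product rule with $P$-product $*$. Then for all series $f,g$, $\overline{f*g}=\overline f*\overline g$; consequently reversal is an endomorphism of the commutative $\mathbb Q$-algebra $(\mathbb Q\langle\langle\Sigma\rangle\rangle;\mathbb 0,c\cdot,+,* )$.
   Context: Let $\Sigma$ be a finite alphabet, $\Sigma^*$ the finite words with empty word $\varepsilon$. A series is $f:\Sigma^*\to\mathbb Q$, $f_w=f(w)$; series form a $\mathbb Q$-vector space under pointwise operations with zero $\mathbb 0$. For $a\in\Sigma$, $\delta_af$ is $w\mapsto f(aw)$. The reversal $\overline f$ is $w\mapsto f(\overline w)$ with $\overline w$ the mirror image of $w$. Terms over $X$: generated by $u,v::=x\mid 0\mid c\cdot u\mid u+v\mid u*v$. A product rule is a term $P$ over $\{x,\dot x,y,\dot y\}$; $P(s_1,\dots,s_4)$ is substitution. The $P$-product $*$ and semantics $[\![u]\!]_\varrho$ are the unique pair with $(f*g)_\varepsilon=f_\varepsilon g_\varepsilon$, $\delta_a(f*g)=[\![P]\!]_{[x\mapsto f,\dot x\mapsto\delta_af,y\mapsto g,\dot y\mapsto\delta_ag]}$, and $[\![\cdot]\!]_\varrho$ interpreting variables via $\varrho$, constructors by zero, scalar multiplication, addition, $*$. $u\approx v$ iff $u,v$ denote the same commutative polynomial. $P$ is special if $P(x+y,\dot x+\dot y,z,\dot z)\approx P(x,\dot x,z,\dot z)+P(y,\dot y,z,\dot z)$, $P(x,\dot x,y*z,P(y,\dot y,z,\dot z))\approx P(x*y,P(x,\dot x,y,\dot y),z,\dot z)$, $P(x,\dot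 x,y,\dot y)\approx P(y,\dot y,x,\dot x)$. *)

theory Defs
  imports Complex_Main
begin

type_synonym 'a series = "'a list \<Rightarrow> rat"

definition szero :: "'a series" where "szero = (\<lambda>w. 0)"
definition sscal :: "rat \<Rightarrow> 'a series \<Rightarrow> 'a series" where "sscal c f = (\<lambda>w. c * f w)"
definition splus :: "'a series \<Rightarrow> 'a series \<Rightarrow> 'a series" where "splus f g = (\<lambda>w. f w + g w)"
definition sderiv :: "'a \<Rightarrow> 'a series \<Rightarrow> 'a series" where "sderiv a f = (\<lambda>w. f (a # w))"
definition srev :: "'a series \<Rightarrow> 'a series" where "srev f = (\<lambda>w. f (rev w))"

datatype 'v trm = Var 'v | Zero | Scal rat "'v trm" | Plus "'v trm" "'v trm" | Times "'v trm" "'v trm"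

fun subst :: "('v \<Rightarrow> 'w trm) \<Rightarrow> 'v trm \<Rightarrow> 'w trm" where
  "subst \<sigma> (Var x) = \<sigma> x"
| "subst \<sigma> Zero = Zero"
| "subst \<sigma> (Scal c u) = Scal c (subst \<sigma> u)"
| "subst \<sigma> (Plus u v) = Plus (subst \<sigma> u) (subst \<sigma> v)"
| "subst \<sigma> (Times u v) = Times (subst \<sigma> u) (subst \<sigma> v)"

datatype var4 = X | Xd | Y | Yd
datatype var6 = X6 | Xd6 | Y6 | Yd6 | Z6 | Zd6

definition app4 :: "var4 trm \<Rightarrow> 'w trm \<Rightarrow> 'w trm \<Rightarrow> 'w trm \<Rightarrow> 'w trm \<Rightarrow> 'w trm" where
  "app4 P s1 s2 s3 s4 = subst (\<lambda>v. case v of X \<Rightarrow> s1 | Xd \<Rightarrow> s2 | Y \<Rightarrow> s3 | Yd \<Rightarrow> s4) P"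

text \<open>Commutative-polynomial evaluation over Q; two terms denote the same
  commutative polynomial in Q[vars] iff they agree under all rational valuations
  (Q is an infinite field).\<close>
fun peval :: "('v \<Rightarrow> rat) \<Rightarrow> 'v trm \<Rightarrow> rat" where
  "peval \<rho> (Var x) = \<rho> x"
| "peval \<rho> Zero = 0"
| "peval \<rho> (Scal c u) = c * peval \<rho> u"
| "peval \<rho> (Plus u v) = peval \<rho> u + peval \<rho> v"
| "peval \<rho> (Times u v) = peval \<rho> u * peval \<rho> v"

definition poly_equiv :: "'v trm \<Rightarrow> 'v trm \<Rightarrow> bool" (infix "\<approx>" 50) where
  "u \<approx> v \<longleftrightarrow> (\<forall>\<rho>. peval \<rho> u = peval \<rho> v)"

definition special :: "var4 trm \<Rightarrow> bool" where
  "special P \<longleftrightarrow>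
     app4 P (Plus (Var X6) (Var Y6)) (Plus (Var Xd6) (Var Yd6)) (Var Z6) (Var Zd6)
       \<approx> Plus (app4 P (Var X6) (Var Xd6) (Var Z6) (Var Zd6)) (app4 P (Var Y6) (Var Yd6) (Var Z6) (Var Zd6))
   \<and> app4 P (Var X6) (Var Xd6) (Times (Var Y6) (Var Z6)) (app4 P (Var Y6) (Var Yd6) (Var Z6) (Var Zd6))
       \<approx> app4 P (Times (Var X6) (Var Y6)) (app4 P (Var X6) (Var Xd6) (Var Y6) (Var Yd6)) (Var Z6) (Var Zd6)
   \<and> app4 P (Var X6) (Var Xd6) (Var Y6) (Var Yd6) \<approx> app4 P (Var Y6) (Var Yd6) (Var X6) (Var Xd6)"

fun sem :: "('a series \<Rightarrow> 'a series \<Rightarrow> 'a series) \<Rightarrow> ('v \<Rightarrow> 'a series) \<Rightarrow> 'v trm \<Rightarrow> 'a series" where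
  "sem m \<rho> (Var x) = \<rho> x"
| "sem m \<rho> Zero = szero"
| "sem m \<rho> (Scal c u) = sscal c (sem m \<rho> u)"
| "sem m \<rho> (Plus u v) = splus (sem m \<rho> u) (sem m \<rho> v)"
| "sem m \<rho> (Times u v) = m (sem m \<rho> u) (sem m \<rho> v)"

definition env4 :: "'a series \<Rightarrow> 'a series \<Rightarrow> 'a series \<Rightarrow> 'a series \<Rightarrow> var4 \<Rightarrow> 'a series" where
  "env4 f f' g g' = (\<lambda>v. case v of X \<Rightarrow> f | Xd \<Rightarrow> f' | Y \<Rightarrow> g | Yd \<Rightarrow> g')"

definition is_P_product :: "var4 trm \<Rightarrow> ('a series \<Rightarrow> 'a series \<Rightarrow> 'a series) \<Rightarrow> bool" where
  "is_P_product P m \<longleftrightarrow>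
     (\<forall>f g. m f g [] = f [] * g [] \<and>
       (\<forall>a. sderiv a (m f g) = sem m (env4 f (sderiv a f) g (sderiv a g)) P))"

definition pprod :: "var4 trm \<Rightarrow> 'a series \<Rightarrow> 'a series \<Rightarrow> 'a series" where
  "pprod P = (THE m. is_P_product P m)"

end

theory Submission
  imports Defs "HOL-Computational_Algebra.Polynomial"
begin


definition eqn :: "nat \<Rightarrow> 'a series \<Rightarrow> 'a series \<Rightarrow> bool" where
  "eqn n f g \<longleftrightarrow> (\<forall>w. length w \<le> n \<longrightarrow> f w = g w)"

definition Rel :: "nat \<Rightarrow> ('a series \<Rightarrow> 'a series \<Rightarrow> 'a series) \<Rightarrow> ('a series \<Rightarrow> 'a series \<Rightarrow> 'a series) \<Rightarrow> bool" where
  "Rel n m1 m2 \<longleftrightarrow> (\<forall>A1 A2 B1 B2. eqn n A1 A2 \<longrightarrow> eqn n B1 B2 \<longrightarrow> eqn n (m1 A1 B1) (m2 A2 B2))"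

lemma sem_cong: "Rel n m1 m2 \<Longrightarrow> (\<And>v. eqn n (\<rho>1 v) (\<rho>2 v)) \<Longrightarrow> eqn n (sem m1 \<rho>1 u) (sem m2 \<rho>2 u)"
  by (induction u) (auto simp: Rel_def eqn_def szero_def sscal_def splus_def)

lemma eqn_mono: "eqn n f g \<Longrightarrow> k \<le> n \<Longrightarrow> eqn k f g"
  by (auto simp: eqn_def)

lemma eqn_deriv: "eqn (Suc n) f g \<Longrightarrow> eqn n (sderiv a f) (sderiv a g)"
  by (auto simp: eqn_def sderiv_def)

lemma eqn_env4: "eqn n f1 f2 \<Longrightarrow> eqn n f1' f2' \<Longrightarrow> eqn n g1 g2 \<Longrightarrow> eqn n g1' g2' \<Longrightarrow>
   eqn n (env4 f1 f1' g1 g1' v) (env4 f2 f2' g2 g2' v)"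
  by (cases v) (auto simp: env4_def)

fun mm :: "var4 trm \<Rightarrow> nat \<Rightarrow> 'a series \<Rightarrow> 'a series \<Rightarrow> 'a series" where
  "mm P 0 = (\<lambda>f g w. f [] * g [])"
| "mm P (Suc n) = (\<lambda>f g w. case w of [] \<Rightarrow> f [] * g []
     | a # w' \<Rightarrow> sem (mm P n) (env4 f (sderiv a f) g (sderiv a g)) P w')"

definition mlim :: "var4 trm \<Rightarrow> 'a series \<Rightarrow> 'a series \<Rightarrow> 'a series" where
  "mlim P f g w = mm P (length w) f g w"

lemma mm_nil: "mm P n f g [] = f [] * g []"
  by (cases n) auto

lemma mm_rel: "k \<le> n \<Longrightarrow> Rel k (mm P k :: 'a series \<Rightarrow> 'a series \<Rightarrow> 'a series) (mm P n)"
proof (induction k arbitrary: n)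
  case 0
  then show ?case by (auto simp: Rel_def eqn_def mm_nil)
next
  case (Suc k)
  from Suc.prems obtain n' where n: "n = Suc n'" by (cases n) simp_all
  have kn: "k \<le> n'" using Suc.prems n by simp
  have R: "Rel k (mm P k :: 'a series \<Rightarrow> 'a series \<Rightarrow> 'a series) (mm P n')" by (rule Suc.IH[OF kn])
  show ?case unfolding Rel_def
  proof (intro allI impI)
    fix A1 A2 B1 B2 :: "'a series"
    assume A: "eqn (Suc k) A1 A2" and B: "eqn (Suc k) B1 B2"
    show "eqn (Suc k) (mm P (Suc k) A1 B1) (mm P n A2 B2)"
      unfolding eqn_def
    proof (intro allI impI)
      fix w :: "'a list" assume w: "length w \<le> Suc k"
      show "mm P (Suc k) A1 B1 w = mm P n A2 B2 w"
      proof (cases w)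
        case Nil then show ?thesis using A B by (simp add: mm_nil eqn_def)
      next
        case (Cons a w')
        have "eqn k (sem (mm P k) (env4 A1 (sderiv a A1) B1 (sderiv a B1)) P)
                    (sem (mm P n') (env4 A2 (sderiv a A2) B2 (sderiv a B2)) P)"
          apply (rule sem_cong[OF R])
          apply (rule eqn_env4)
          using eqn_mono[OF A, of k] eqn_mono[OF B, of k] eqn_deriv[OF A] eqn_deriv[OF B] by simp_all
        moreover have "length w' \<le> k" using Cons w by simp
        ultimately have e: "sem (mm P k) (env4 A1 (sderiv a A1) B1 (sderiv a B1)) P w'
              = sem (mm P n') (env4 A2 (sderiv a A2) B2 (sderiv a B2)) P w'"
          by (simp add: eqn_def)
        have l: "mm P (Suc k) A1 B1 (a # w') = sem (mm P k) (env4 A1 (sderiv a A1) B1 (sderiv a B1)) P w'"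
          by simp
        have r: "mm P n A2 B2 (a # w') = sem (mm P n') (env4 A2 (sderiv a A2) B2 (sderiv a B2)) P w'"
          by (simp add: n)
        show ?thesis unfolding Cons l r e ..
      qed
    qed
  qed
qed

lemma mm_mlim_rel: "Rel n (mm P n) (mlim P)"
  unfolding Rel_def eqn_def
proof (intro allI impI)
  fix A1 A2 B1 B2 :: "'a series" and v :: "'a list"
  assume A: "\<forall>w. length w \<le> n \<longrightarrow> A1 w = A2 w" and B: "\<forall>w. length w \<le> n \<longrightarrow> B1 w = B2 w"
    and v: "length v \<le> n"
  have "Rel (length v) (mm P (length v) :: 'a series \<Rightarrow> 'a series \<Rightarrow> 'a series) (mm P n)" using mm_rel v by blast
  moreover have "eqn (length v) A2 A1" "eqn (length v) B2 B1"
    using A B v by (auto simp: eqn_def)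
  ultimately have "eqn (length v) (mm P (length v) A2 B2) (mm P n A1 B1)"
    by (auto simp: Rel_def)
  then show "mm P n A1 B1 v = mlim P A2 B2 v"
    by (auto simp: eqn_def mlim_def)
qed

lemma mlim_deriv: fixes f g :: "'a series"
  shows "sderiv a (mlim P f g) = sem (mlim P) (env4 f (sderiv a f) g (sderiv a g)) P"
proof (rule ext)
  fix w :: "'a list"
  have "eqn (length w) (sem (mm P (length w)) (env4 f (sderiv a f) g (sderiv a g)) P)
             (sem (mlim P) (env4 f (sderiv a f) g (sderiv a g)) P)"
    by (rule sem_cong[OF mm_mlim_rel]) (simp add: eqn_def)
  then show "sderiv a (mlim P f g) w = sem (mlim P) (env4 f (sderiv a f) g (sderiv a g)) P w"
    by (simp add: eqn_def sderiv_def mlim_def)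
qed

lemma mlim_is_P: "is_P_product P (mlim P)"
  unfolding is_P_product_def using mlim_deriv by (auto simp: mlim_def)

lemma P_unique_rel: "is_P_product P m1 \<Longrightarrow> is_P_product P m2 \<Longrightarrow> Rel n m1 m2"
proof (induction n)
  case 0
  then show ?case by (auto simp: Rel_def eqn_def is_P_product_def)
next
  case (Suc n)
  show ?case unfolding Rel_def
  proof (intro allI impI)
    fix A1 A2 B1 B2 :: "'a series"
    assume A: "eqn (Suc n) A1 A2" and B: "eqn (Suc n) B1 B2"
    show "eqn (Suc n) (m1 A1 B1) (m2 A2 B2)"
      unfolding eqn_def
    proof (intro allI impI)
      fix w :: "'a list" assume w: "length w \<le> Suc n"
      show "m1 A1 B1 w = m2 A2 B2 w"
      proof (cases w)
        case Nil then show ?thesis using A B Suc.prems by (simp add: eqn_def is_P_product_def)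
      next
        case (Cons a w')
        have "eqn n (sem m1 (env4 A1 (sderiv a A1) B1 (sderiv a B1)) P)
                    (sem m2 (env4 A2 (sderiv a A2) B2 (sderiv a B2)) P)"
          apply (rule sem_cong[OF Suc.IH[OF Suc.prems]])
          apply (rule eqn_env4)
          using eqn_mono[OF A, of n] eqn_mono[OF B, of n] eqn_deriv[OF A] eqn_deriv[OF B] by simp_all
        moreover have "length w' \<le> n" using Cons w by simp
        ultimately have e: "sem m1 (env4 A1 (sderiv a A1) B1 (sderiv a B1)) P w'
              = sem m2 (env4 A2 (sderiv a A2) B2 (sderiv a B2)) P w'"
          by (simp add: eqn_def)
        have l: "m1 A1 B1 (a # w') = sem m1 (env4 A1 (sderiv a A1) B1 (sderiv a B1)) P w'"
        proof -
          have "m1 A1 B1 (a # w') = sderiv a (m1 A1 B1) w'" by (simp add: sderiv_def)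
          also have "\<dots> = sem m1 (env4 A1 (sderiv a A1) B1 (sderiv a B1)) P w'"
            using Suc.prems(1) unfolding is_P_product_def by simp
          finally show ?thesis .
        qed
        have r: "m2 A2 B2 (a # w') = sem m2 (env4 A2 (sderiv a A2) B2 (sderiv a B2)) P w'"
        proof -
          have "m2 A2 B2 (a # w') = sderiv a (m2 A2 B2) w'" by (simp add: sderiv_def)
          also have "\<dots> = sem m2 (env4 A2 (sderiv a A2) B2 (sderiv a B2)) P w'"
            using Suc.prems(2) unfolding is_P_product_def by simp
          finally show ?thesis .
        qed
        show ?thesis unfolding Cons l r e ..
      qed
    qed
  qed
qed

lemma P_unique: "is_P_product P m1 \<Longrightarrow> is_P_product P m2 \<Longrightarrow> m1 = m2"
proof (intro ext)
  fix f g :: "'a series" and w :: "'a list"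
  assume "is_P_product P m1" "is_P_product P m2"
  then have "Rel (length w) m1 m2" by (rule P_unique_rel)
  then show "m1 f g w = m2 f g w" by (auto simp: Rel_def eqn_def)
qed

lemma pprod_is: "is_P_product P (pprod P)"
  unfolding pprod_def
  by (rule theI[of "is_P_product P", OF mlim_is_P]) (rule P_unique[OF _ mlim_is_P])



lemma peval_subst: "peval \<sigma> (subst s t) = peval (\<lambda>v. peval \<sigma> (s v)) t"
  by (induction t) auto

lemma sem_subst: "sem m \<rho> (subst s t) = sem m (\<lambda>v. sem m \<rho> (s v)) t"
  by (induction t) auto

definition fP :: "var4 trm \<Rightarrow> rat \<Rightarrow> rat \<Rightarrow> rat \<Rightarrow> rat \<Rightarrow> rat" where
  "fP P a b c d = peval (\<lambda>v. case v of X \<Rightarrow> a | Xd \<Rightarrow> b | Y \<Rightarrow> c | Yd \<Rightarrow> d) P"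

lemma peval_app4: "peval \<sigma> (app4 P s1 s2 s3 s4) = fP P (peval \<sigma> s1) (peval \<sigma> s2) (peval \<sigma> s3) (peval \<sigma> s4)"
  unfolding app4_def fP_def peval_subst
  apply (rule arg_cong[where f="\<lambda>r. peval r P"])
  apply (rule ext)
  apply (simp split: var4.split)
  done

lemma special_conds:
  assumes "special P"
  shows "fP P (x+y) (xd+yd) z zd = fP P x xd z zd + fP P y yd z zd"
    and "fP P x xd (y*z) (fP P y yd z zd) = fP P (x*y) (fP P x xd y yd) z zd"
    and "fP P x xd y yd = fP P y yd x xd"
proof -
  define r where "r = (\<lambda>v. case v of X6 \<Rightarrow> x | Xd6 \<Rightarrow> xd | Y6 \<Rightarrow> y | Yd6 \<Rightarrow> yd | Z6 \<Rightarrow> z | Zd6 \<Rightarrow> zd)"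
  have r: "r X6 = x" "r Xd6 = xd" "r Y6 = y" "r Yd6 = yd" "r Z6 = z" "r Zd6 = zd" by (simp_all add: r_def)
  from assms have 
   "peval r (app4 P (Plus (Var X6) (Var Y6)) (Plus (Var Xd6) (Var Yd6)) (Var Z6) (Var Zd6))
       = peval r (Plus (app4 P (Var X6) (Var Xd6) (Var Z6) (Var Zd6)) (app4 P (Var Y6) (Var Yd6) (Var Z6) (Var Zd6)))"
   "peval r (app4 P (Var X6) (Var Xd6) (Times (Var Y6) (Var Z6)) (app4 P (Var Y6) (Var Yd6) (Var Z6) (Var Zd6)))
       = peval r (app4 P (Times (Var X6) (Var Y6)) (app4 P (Var X6) (Var Xd6) (Var Y6) (Var Yd6)) (Var Z6) (Var Zd6))"
   "peval r (app4 P (Var X6) (Var Xd6) (Var Y6) (Var Yd6)) = peval r (app4 P (Var Y6) (Var Yd6) (Var X6) (Var Xd6))"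
    unfolding special_def poly_equiv_def by blast+
  then show "fP P (x+y) (xd+yd) z zd = fP P x xd z zd + fP P y yd z zd"
    and "fP P x xd (y*z) (fP P y yd z zd) = fP P (x*y) (fP P x xd y yd) z zd"
    and "fP P x xd y yd = fP P y yd x xd"
    by (simp_all add: peval_app4 r)
qed

lemma additive_hom:
  fixes F :: "rat \<Rightarrow> rat \<Rightarrow> rat"
  assumes add: "\<And>x xd y yd. F (x+y) (xd+yd) = F x xd + F y yd"
  shows "F (q*x) (q*xd) = q * F x xd"
proof -
  have F0: "F 0 0 = 0" using add[of 0 0 0 0] by simp
  have nat: "F (of_nat n * x) (of_nat n * xd) = of_nat n * F x xd" for n :: nat and x xd
  proof (induction n)
    case 0 then show ?case using F0 by simp
  next
    case (Suc n)
    have "F (of_nat (Suc n) * x) (of_nat (Suc n) * xd) = F (of_nat n * x + x) (of_nat n * xd + xd)"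
      by (simp add: algebra_simps)
    also have "\<dots> = of_nat n * F x xd + F x xd" using add Suc.IH by simp
    finally show ?case by (simp add: algebra_simps)
  qed
  have neg: "F (- x) (- xd) = - F x xd" for x xd
    using add[of x "-x" xd "-xd"] F0 by simp
  have int: "F (of_int k * x) (of_int k * xd) = of_int k * F x xd" for k :: int and x xd
  proof (cases "k \<ge> 0")
    case True
    then obtain n where "k = int n" by (metis nonneg_eq_int)
    then show ?thesis using nat by simp
  next
    case False
    then obtain n where "k = - int n" by (metis nonpos_int_cases not_le less_imp_le)
    then show ?thesis using nat[of n x xd] neg[of "of_nat n * x" "of_nat n * xd"] by simp
  qed
  obtain a b where q: "q = of_int a / of_int b" and b: "b > 0"
    by (cases q) (auto simp: Fract_of_int_quotient)
  have "of_int b * F (q*x) (q*xd) = F (of_int b * (q*x)) (of_int b * (q*xd))"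
    using int by simp
  also have "\<dots> = F (of_int a * x) (of_int a * xd)" using b by (simp add: q)
  also have "\<dots> = of_int a * F x xd" using int by simp
  finally show ?thesis using b by (simp add: q field_simps)
qed

lemma coef_form:
  assumes "special P"
  shows "fP P x xd y yd = fP P 1 0 1 0 * x * y + fP P 0 1 1 0 * (xd * y + x * yd) + fP P 0 1 0 1 * xd * yd"
proof -
  note c = special_conds[OF assms]
  have lin: "fP P x xd y yd = x * fP P 1 0 y yd + xd * fP P 0 1 y yd" for x xd y yd
  proof -
    have h: "fP P (q*a) (q*b) y yd = q * fP P a b y yd" for q a b
      by (rule additive_hom) (rule c(1))
    have "fP P x xd y yd = fP P (x + 0) (0 + xd) y yd" by simp
    also have "\<dots> = fP P x 0 y yd + fP P 0 xd y yd" by (rule c(1))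
    also have "fP P x 0 y yd = x * fP P 1 0 y yd" using h[of x 1 0] by simp
    also have "fP P 0 xd y yd = xd * fP P 0 1 y yd" using h[of xd 0 1] by simp
    finally show ?thesis .
  qed
  have a1: "fP P 1 0 y yd = y * fP P 1 0 1 0 + yd * fP P 0 1 1 0"
  proof -
    have "fP P 1 0 y yd = fP P y yd 1 0" by (rule c(3))
    also have "\<dots> = y * fP P 1 0 1 0 + yd * fP P 0 1 1 0" by (rule lin)
    finally show ?thesis .
  qed
  have a2: "fP P 0 1 y yd = y * fP P 0 1 1 0 + yd * fP P 0 1 0 1"
  proof -
    have "fP P 0 1 y yd = fP P y yd 0 1" by (rule c(3))
    also have "\<dots> = y * fP P 1 0 0 1 + yd * fP P 0 1 0 1" by (rule lin)
    also have "fP P 1 0 0 1 = fP P 0 1 1 0" by (rule c(3))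
    finally show ?thesis .
  qed
  show ?thesis using lin[of x xd y yd] a1 a2 by (simp add: algebra_simps)
qed

lemma coef_assoc:
  assumes "special P"
  shows "fP P 0 1 1 0 + fP P 0 1 0 1 * fP P 1 0 1 0 = fP P 0 1 1 0 * fP P 0 1 1 0"
proof -
  define c1 where "c1 = fP P 1 0 1 0"
  define c2 where "c2 = fP P 0 1 1 0"
  define c4 where "c4 = fP P 0 1 0 1"
  have cf: "fP P x xd y yd = c1 * x * y + c2 * (xd * y + x * yd) + c4 * xd * yd" for x xd y yd
    unfolding c1_def c2_def c4_def by (rule coef_form[OF assms])
  have "fP P 1 0 (1 * 0) (fP P 1 0 0 1) = fP P (1 * 1) (fP P 1 0 1 0) 0 1"
    by (rule special_conds(2)[OF assms])
  then have "c2 * c2 = c2 + c4 * c1" by (simp add: cf)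
  then show ?thesis by (simp add: c1_def c2_def c4_def)
qed



fun Der :: "('v \<Rightarrow> rat) \<Rightarrow> ('v \<Rightarrow> rat) \<Rightarrow> 'v trm \<Rightarrow> rat" where
  "Der b s (Var x) = s x"
| "Der b s Zero = 0"
| "Der b s (Scal c u) = c * Der b s u"
| "Der b s (Plus u v) = Der b s u + Der b s v"
| "Der b s (Times u v) = Der b s u * peval b v + peval b u * Der b s v"

fun qp :: "('v \<Rightarrow> rat) \<Rightarrow> ('v \<Rightarrow> rat) \<Rightarrow> 'v trm \<Rightarrow> rat poly" where
  "qp b s (Var x) = [:b x, s x:]"
| "qp b s Zero = 0"
| "qp b s (Scal c u) = smult c (qp b s u)"
| "qp b s (Plus u v) = qp b s u + qp b s v"
| "qp b s (Times u v) = qp b s u * qp b s v"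

lemma qp_poly: "poly (qp b s u) t = peval (\<lambda>x. b x + t * s x) u"
  by (induction u) (auto simp: algebra_simps)

lemma coeff_mult_1: "coeff (p * q) (Suc 0) = coeff p 0 * coeff q 1 + coeff p 1 * coeff (q::rat poly) 0"
  by (simp add: coeff_mult atMost_Suc)

lemma qp_coeff: "coeff (qp b s u) 0 = peval b u \<and> coeff (qp b s u) 1 = Der b s u"
  by (induction u) (auto simp: coeff_mult_1 coeff_mult_0 algebra_simps)

lemma Der_equiv: "u \<approx> v \<Longrightarrow> Der b s u = Der b s v"
proof -
  assume "u \<approx> v"
  then have "poly (qp b s u) = poly (qp b s v)"
    by (auto simp: qp_poly poly_equiv_def)
  then have "qp b s u = qp b s v" by (simp add: poly_eq_poly_eq_iff)
  then show ?thesis using qp_coeff[of b s u] qp_coeff[of b s v] by simp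
qed

lemma peval_zero: "peval (\<lambda>_. 0) u = 0"
  by (induction u) auto

fun sA :: "rat \<Rightarrow> rat \<Rightarrow> rat \<Rightarrow> ('v \<Rightarrow> rat) \<Rightarrow> ('v \<Rightarrow> rat) \<Rightarrow> 'v trm \<Rightarrow> rat" where
  "sA c1 c2 c4 a a' (Var x) = a' x"
| "sA c1 c2 c4 a a' Zero = 0"
| "sA c1 c2 c4 a a' (Scal c u) = c * sA c1 c2 c4 a a' u"
| "sA c1 c2 c4 a a' (Plus u v) = sA c1 c2 c4 a a' u + sA c1 c2 c4 a a' v"
| "sA c1 c2 c4 a a' (Times u v) = c1 * peval a u * peval a v
     + c2 * (sA c1 c2 c4 a a' u * peval a v + peval a u * sA c1 c2 c4 a a' v)
     + c4 * sA c1 c2 c4 a a' u * sA c1 c2 c4 a a' v"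

lemma sA_char:
  assumes rel: "c2 + c4 * c1 = c2 * c2"
  shows "peval (\<lambda>x. c2 * a x + c4 * a' x) u = c2 * peval a u + c4 * sA c1 c2 c4 a a' u"
proof (induction u)
  case (Times u v)
  define pu where "pu = peval a u"
  define pv where "pv = peval a v"
  define su where "su = sA c1 c2 c4 a a' u"
  define sv where "sv = sA c1 c2 c4 a a' v"
  have "peval (\<lambda>x. c2 * a x + c4 * a' x) (Times u v) = (c2 * pu + c4 * su) * (c2 * pv + c4 * sv)"
    using Times by (simp add: pu_def pv_def su_def sv_def)
  also have "\<dots> = c2 * (pu * pv) + c4 * (c1 * pu * pv + c2 * (su * pv + pu * sv) + c4 * su * sv)"
    using rel by algebra
  finally show ?case by (simp add: pu_def pv_def su_def sv_def algebra_simps)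
qed (auto simp: algebra_simps)

lemma sA_Der1:
  "Der a (\<lambda>x. a' x + c1 * a x) u = sA c1 1 0 a a' u + c1 * peval a u"
  by (induction u) (auto simp: algebra_simps)

lemma sA_Der0:
  "Der (\<lambda>_. 0) (\<lambda>x. a' x - c1 * a x) u = sA c1 0 0 a a' u - c1 * peval a u"
  apply (induction u)
  apply (simp_all add: peval_zero)
  apply (simp_all add: algebra_simps)
  done

lemma sA_equiv:
  assumes rel: "c2 + c4 * c1 = c2 * c2" and uv: "u \<approx> v"
  shows "sA c1 c2 c4 a a' u = sA c1 c2 c4 a a' v"
proof (cases "c4 = 0")
  case False
  have e1: "peval (\<lambda>x. c2 * a x + c4 * a' x) u = peval (\<lambda>x. c2 * a x + c4 * a' x) v"
    "peval a u = peval a v" using uv by (simp_all add: poly_equiv_def)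
  have "c4 * sA c1 c2 c4 a a' u = c4 * sA c1 c2 c4 a a' v"
    using e1 sA_char[OF rel, where a=a and a'=a' and u=u] sA_char[OF rel, where a=a and a'=a' and u=v]
    by simp
  then show ?thesis using False by simp
next
  case True
  then have "c2 = 0 \<or> c2 = 1" using rel by (metis mult_cancel_right1 mult_zero_left add_0_right)
  then show ?thesis
  proof
    assume "c2 = 0" then show ?thesis using True uv Der_equiv[OF uv, where b="\<lambda>_. 0" and s="\<lambda>x. a' x - c1 * a x"]
      by (simp add: sA_Der0 poly_equiv_def)
  next
    assume "c2 = 1" then show ?thesis using True uv Der_equiv[OF uv, where b=a and s="\<lambda>x. a' x + c1 * a x"]
      by (simp add: sA_Der1 poly_equiv_def)
  qed
qed

definition E :: "nat trm \<Rightarrow> nat trm" where "E u = subst (\<lambda>x. Var (2 * x)) u"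

fun D :: "var4 trm \<Rightarrow> nat trm \<Rightarrow> nat trm" where
  "D P (Var x) = Var (2 * x + 1)"
| "D P Zero = Zero"
| "D P (Scal c u) = Scal c (D P u)"
| "D P (Plus u v) = Plus (D P u) (D P v)"
| "D P (Times u v) = app4 P (E u) (D P u) (E v) (D P v)"

lemma peval_E: "peval \<sigma> (E u) = peval (\<lambda>x. \<sigma> (2 * x)) u"
  by (simp add: E_def peval_subst)

lemma peval_D:
  assumes cf: "\<And>x xd y yd. fP P x xd y yd = c1 * x * y + c2 * (xd * y + x * yd) + c4 * xd * yd"
  shows "peval \<sigma> (D P u) = sA c1 c2 c4 (\<lambda>x. \<sigma> (2 * x)) (\<lambda>x. \<sigma> (2 * x + 1)) u"
  by (induction u) (auto simp: peval_app4 cf peval_E algebra_simps)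

lemma sem_app4: "sem m \<rho> (app4 P s1 s2 s3 s4) = sem m (env4 (sem m \<rho> s1) (sem m \<rho> s2) (sem m \<rho> s3) (sem m \<rho> s4)) P"
  unfolding app4_def env4_def sem_subst
  apply (rule arg_cong[where f="\<lambda>r. sem m r P"])
  apply (rule ext)
  apply (simp split: var4.split)
  done

definition denv :: "'a \<Rightarrow> (nat \<Rightarrow> 'a series) \<Rightarrow> nat \<Rightarrow> 'a series" where
  "denv a \<rho> k = (if even k then \<rho> (k div 2) else sderiv a (\<rho> (k div 2)))"

lemma sem_E: "sem m (denv a \<rho>) (E u) = sem m \<rho> u"
  by (simp add: E_def sem_subst denv_def)

lemma sem_D:
  assumes "is_P_product P m"
  shows "sem m (denv a \<rho>) (D P u) = sderiv a (sem m \<rho> u)"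
proof (induction u)
  case (Var x)
  then show ?case by (simp add: denv_def)
next
  case Zero
  then show ?case by (simp add: sderiv_def szero_def)
next
  case (Scal c u)
  then show ?case by (simp add: sderiv_def sscal_def)
next
  case (Plus u v)
  then show ?case by (simp add: sderiv_def splus_def)
next
  case (Times u v)
  then show ?case using assms by (simp add: sem_app4 sem_E is_P_product_def)
qed

lemma sem_nil: "is_P_product P m \<Longrightarrow> sem m \<rho> u [] = peval (\<lambda>x. \<rho> x []) u"
  by (induction u) (auto simp: szero_def sscal_def splus_def is_P_product_def)

lemma transport_nat:
  assumes m: "is_P_product P m"
    and cf: "\<And>x xd y yd. fP P x xd y yd = c1 * x * y + c2 * (xd * y + x * yd) + c4 * xd * yd"
    and rel: "c2 + c4 * c1 = c2 * c2"
  shows "u \<approx> v \<Longrightarrow> sem m \<rho> u w = sem m \<rho> (v :: nat trm) w"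
proof (induction w arbitrary: \<rho> u v)
  case Nil
  then show ?case by (simp add: sem_nil[OF m] poly_equiv_def)
next
  case (Cons a w)
  have "D P u \<approx> D P v"
    unfolding poly_equiv_def using Cons.prems by (simp add: peval_D[OF cf] sA_equiv[OF rel])
  then have "sem m (denv a \<rho>) (D P u) w = sem m (denv a \<rho>) (D P v) w" by (rule Cons.IH)
  then show ?case using sem_D[OF m] by (simp add: sderiv_def)
qed



lemma transport:
  fixes u v :: "'v trm"
  assumes m: "is_P_product P m"
    and cf: "\<And>x xd y yd. fP P x xd y yd = c1 * x * y + c2 * (xd * y + x * yd) + c4 * xd * yd"
    and rel: "c2 + c4 * c1 = c2 * c2"
    and r: "inj (r :: 'v \<Rightarrow> nat)" and uv: "u \<approx> v"
  shows "sem m \<rho> u = sem m \<rho> v"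
proof -
  define ren where "ren t = subst (\<lambda>x. Var (r x)) t" for t :: "'v trm"
  have "ren u \<approx> ren v" using uv by (simp add: ren_def poly_equiv_def peval_subst)
  have s: "sem m (\<lambda>k. \<rho> (inv r k)) (ren t) = sem m \<rho> t" for t
    by (simp add: ren_def sem_subst inv_f_f[OF r])
  show ?thesis
  proof
    fix w
    have "sem m (\<lambda>k. \<rho> (inv r k)) (ren u) w = sem m (\<lambda>k. \<rho> (inv r k)) (ren v) w"
      by (rule transport_nat[OF m cf rel \<open>ren u \<approx> ren v\<close>])
    then show "sem m \<rho> u w = sem m \<rho> v w" by (simp add: s)
  qed
qed

lemma peval_fP: "peval \<rho> P = fP P (\<rho> X) (\<rho> Xd) (\<rho> Y) (\<rho> Yd)"
  unfolding fP_def
  apply (rule arg_cong[where f="\<lambda>r. peval r P"])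
  apply (rule ext)
  apply (simp split: var4.split)
  done

definition r4 :: "var4 \<Rightarrow> nat" where
  "r4 v = (case v of X \<Rightarrow> 0 | Xd \<Rightarrow> 1 | Y \<Rightarrow> 2 | Yd \<Rightarrow> 3)"

lemma inj_r4: "inj r4"
  unfolding inj_def r4_def by (auto split: var4.splits)

lemma Pform:
  assumes sp: "special P" and m: "is_P_product P m"
  shows "sem m (env4 f f' g g') P = (\<lambda>w. fP P 1 0 1 0 * m f g w
     + fP P 0 1 1 0 * (m f' g w + m f g' w) + fP P 0 1 0 1 * m f' g' w)"
proof -
  define c1 where "c1 = fP P 1 0 1 0"
  define c2 where "c2 = fP P 0 1 1 0"
  define c4 where "c4 = fP P 0 1 0 1"
  have cf: "\<And>x xd y yd. fP P x xd y yd = c1 * x * y + c2 * (xd * y + x * yd) + c4 * xd * yd"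
    unfolding c1_def c2_def c4_def by (rule coef_form[OF sp])
  have rel: "c2 + c4 * c1 = c2 * c2" using coef_assoc[OF sp] by (simp add: c1_def c2_def c4_def)
  define P' where "P' = Plus (Scal c1 (Times (Var X) (Var Y)))
     (Plus (Scal c2 (Plus (Times (Var Xd) (Var Y)) (Times (Var X) (Var Yd)))) (Scal c4 (Times (Var Xd) (Var Yd))))"
  have "P \<approx> P'" unfolding poly_equiv_def
    by (simp add: peval_fP[where P=P] cf P'_def algebra_simps)
  then have "sem m (env4 f f' g g') P = sem m (env4 f f' g g') P'"
    by (rule transport[OF m cf rel inj_r4])
  then show ?thesis
    by (simp add: P'_def env4_def splus_def sscal_def c1_def[symmetric] c2_def[symmetric] c4_def[symmetric] add.assoc)
qed

definition rd :: "'a \<Rightarrow> 'a series \<Rightarrow> 'a series" where "rd a f = (\<lambda>w. f (w @ [a]))"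

lemma rd_sderiv: "sderiv b (rd a f) = rd a (sderiv b f)"
  by (simp add: rd_def sderiv_def)

lemma drule:
  assumes sp: "special P" and m: "is_P_product P m"
  shows "m f g (b # w) = fP P 1 0 1 0 * m f g w
     + fP P 0 1 1 0 * (m (sderiv b f) g w + m f (sderiv b g) w) + fP P 0 1 0 1 * m (sderiv b f) (sderiv b g) w"
proof -
  have "m f g (b # w) = sderiv b (m f g) w" by (simp add: sderiv_def)
  also have "\<dots> = sem m (env4 f (sderiv b f) g (sderiv b g)) P w" using m by (simp add: is_P_product_def)
  finally show ?thesis by (simp add: Pform[OF sp m])
qed

lemma key:
  assumes sp: "special P" and m: "is_P_product P m"
  shows "m f g (w @ [a]) = fP P 1 0 1 0 * m f g w
     + fP P 0 1 1 0 * (m (rd a f) g w + m f (rd a g) w) + fP P 0 1 0 1 * m (rd a f) (rd a g) w"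
proof (induction w arbitrary: f g)
  case Nil
  have e: "m f g [] = f [] * g []" for f g using m by (simp add: is_P_product_def)
  show ?case using drule[OF sp m, of f g a "[]"] by (simp add: e rd_def sderiv_def)
next
  case (Cons b w)
  show ?case
    by (simp only: append_Cons drule[OF sp m] Cons.IH rd_sderiv) (simp add: algebra_simps)
qed

lemma srev_srev: "srev (srev f) = f" by (simp add: srev_def)

lemma srev_apply: "srev F x = F (rev x)" by (simp add: srev_def)

lemma sem_srev:
  "sem (\<lambda>f g. srev (m (srev f) (srev g))) \<rho> u = srev (sem m (\<lambda>x. srev (\<rho> x)) u)"
  by (induction u) (auto simp: srev_srev srev_def szero_def sscal_def splus_def)

lemma rd_srev: "rd a (srev f) = srev (sderiv a f)"
  by (simp add: rd_def srev_def sderiv_def)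

lemma srev_env4: "(\<lambda>x. srev (env4 f f' g g' x)) = env4 (srev f) (srev f') (srev g) (srev g')"
  by (rule ext) (simp add: env4_def split: var4.split)

lemma srev_prod:
  fixes f g :: "'a series"
  assumes sp: "special P"
  shows "srev (pprod P f g) = pprod P (srev f) (srev g)"
proof -
  define m where "m = (pprod P :: 'a series \<Rightarrow> 'a series \<Rightarrow> 'a series)"
  have m: "is_P_product P m" unfolding m_def by (rule pprod_is)
  define m' where "m' = (\<lambda>f g :: 'a series. srev (m (srev f) (srev g)))"
  have "is_P_product P m'"
    unfolding is_P_product_def
  proof (intro allI conjI)
    fix f g :: "'a series"
    show "m' f g [] = f [] * g []" using m by (simp add: m'_def srev_def is_P_product_def)
    fix a
    show "sderiv a (m' f g) = sem m' (env4 f (sderiv a f) g (sderiv a g)) P"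
      unfolding m'_def sem_srev srev_env4 Pform[OF sp m]
      by (rule ext) (simp add: sderiv_def srev_apply key[OF sp m] rd_srev)
  qed
  then have "m' = m" using m by (rule P_unique)
  then have "m' (srev f) (srev g) = m (srev f) (srev g)" by simp
  then show ?thesis by (simp add: m'_def srev_srev m_def)
qed


theorem mainTheorem17:
  fixes P :: "var4 trm"
  assumes "special P"
  shows "(\<forall>f g :: ('a::finite) series. srev (pprod P f g) = pprod P (srev f) (srev g))
    \<and> srev (szero :: 'a series) = szero
    \<and> (\<forall>(c::rat) (f :: 'a series). srev (sscal c f) = sscal c (srev f))
    \<and> (\<forall>f g :: 'a series. srev (splus f g) = splus (srev f) (srev g))"
proof (intro conjI allI)
  fix f g :: "'a series"
  show "srev (pprod P f g) = pprod P (srev f) (srev g)" by (rule srev_prod[OF assms])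
next
  show "srev (szero :: 'a series) = szero" by (simp add: srev_def szero_def)
next
  fix c :: rat and f :: "'a series"
  show "srev (sscal c f) = sscal c (srev f)" by (simp add: srev_def sscal_def)
next
  fix f g :: "'a series"
  show "srev (splus f g) = splus (srev f) (srev g)" by (simp add: srev_def splus_def)
qed

end
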